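(* Let $m\ge2$ be even and let $\mathcal{A},\mathcal{B}$ be sub-symmetric real $m$-th order $n$-dimensional tensors ($n=n_1+\cdots+n_r$). Consider the problem $$\begin{array}{cl}\min & f(x,y,w,\lambda):=\|y-\lambda^{\frac1{m-1}}x\|^2+(x^\top w)^2\\ \text{s.t.} & w-\mathcal{A}y^{m-1}+\mathcal{B}x^{m-1}=0,\\ & (x^i_\circ)^2-\|x^i_\bullet\|^2\ge0,\ x^i_\circ\ge0,\ i=1,\ldots,r,\\ & (w^i_\circ)^2-\|w^i_\bullet\|^2\ge0,\ w^i_\circ\ge0,\ i=1,\ldots,r,\\ & e^\top x=1,\quad e^\top y=\lambda^{\frac1{m-1}}.\end{array}$$ Let $(\bar x,\bar y,\bar w,\bar\lambda)$ be a stationary point of this problem with $\bar\lambda\neq0$, with associated multipliers as below, and let $\bar\delta,\bar\eta$ be the multipliers of the constraints $e^\top x=1$ and $e^\top y=\lambda^{1/(m-1)}$, respectively. Then $f(\bar x,\bar y,\bar w,\bar\lambda)=0$ if and only if $\bar\delta=\bar\eta=0$.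
   Context: A real $m$-th order $n$-dimensional tensor $\mathcal{A}=(a_{i_1\ldots i_m})$ is sub-symmetric if for each $i$ the tensor $(a_{ii_2\ldots i_m})_{i_2,\ldots,i_m}$ is invariant under permutations of $i_2,\ldots,i_m$. $\mathcal{A}x^{m-1}\in\mathbb{R}^n$ has $i$-th component $\sum_{i_2,\ldots,i_m}a_{ii_2\ldots i_m}x_{i_2}\cdots x_{i_m}$. Vectors are written $x=(x^1,\ldots,x^r)\in\mathbb{R}^{n_1}\times\cdots\times\mathbb{R}^{n_r}$, $x^i=(x^i_\circ,x^i_\bullet)\in\mathbb{R}\times\mathbb{R}^{n_i-1}$ (similarly $y,w$). $e=(e^1,\ldots,e^r)$, $e^i=(1,0,\ldots,0)^\top\in\mathbb{R}^{n_i}$. Since $m-1$ is odd, $\lambda^{1/(m-1)}$ is the real $(m-1)$-th root (differentiable at $\lambda\ne0$). A stationary point is a feasible point $(\bar x,\bar y,\bar w,\bar\lambda)$ for which there exist multipliers $\bar\alpha\in\mathbb{R}^n$, $\bar\beta,\bar\gamma,\bar\mu,\bar\theta\in\mathbb{R}^r_+$, $\bar\delta,\bar\eta\in\mathbb{R}$ such that the gradient with respect to $(x,y,w,\lambda)$ of the Lagrangian $$f-\bar\alpha^\top(w-\mathcal{A}y^{m-1}+\mathcal{B}x^{m-1})-\sum_i\bar\beta_i\big((x^i_\circ)^2-\|x^i_\bullet\|^2\big)-\sum_i\bar\gamma_ix^i_\circ-\sum_i\bar\mu_i\big((w^i_\circ)^2-\|w^i_\bullet\|^2\big)-\sum_i\bar\theta_iw^i_\circ-\bar\delta(e^\top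 x-1)-\bar\eta(e^\top y-\lambda^{\frac1{m-1}})$$ vanishes at $(\bar x,\bar y,\bar w,\bar\lambda)$, and each inequality multiplier times its constraint value is zero. *)

theory Defs
  imports "HOL-Analysis.Analysis" "HOL-Combinatorics.Permutations"
begin

(* Vectors in R^n are functions nat => real, only coordinates 0..n-1 matter.
   The block structure R^{n_1} x ... x R^{n_r} is given by r and the sizes ns 0 .. ns (r-1);
   block i occupies coordinates blk_off ns i, ..., blk_off ns i + ns i - 1.
   An m-th order n-dimensional tensor is a function from index lists (length m,
   entries < n) to reals. *)

definition blk_off :: "(nat \<Rightarrow> nat) \<Rightarrow> nat \<Rightarrow> nat" where
  "blk_off ns i = (\<Sum>j<i. ns j)"

definition tot_dim :: "nat \<Rightarrow> (nat \<Rightarrow> nat) \<Rightarrow> nat" where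
  "tot_dim r ns = (\<Sum>j<r. ns j)"

definition head :: "(nat \<Rightarrow> nat) \<Rightarrow> (nat \<Rightarrow> real) \<Rightarrow> nat \<Rightarrow> real" where
  "head ns x i = x (blk_off ns i)"

definition tail_sq :: "(nat \<Rightarrow> nat) \<Rightarrow> (nat \<Rightarrow> real) \<Rightarrow> nat \<Rightarrow> real" where
  "tail_sq ns x i = (\<Sum>k\<in>{Suc (blk_off ns i)..<blk_off ns i + ns i}. (x k)^2)"

definition e_dot :: "nat \<Rightarrow> (nat \<Rightarrow> nat) \<Rightarrow> (nat \<Rightarrow> real) \<Rightarrow> real" where
  "e_dot r ns x = (\<Sum>i<r. head ns x i)"

definition idx_lists :: "nat \<Rightarrow> nat \<Rightarrow> nat list set" where
  "idx_lists n k = {is. length is = k \<and> set is \<subseteq> {..<n}}"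

definition tens_app :: "nat \<Rightarrow> nat \<Rightarrow> (nat list \<Rightarrow> real) \<Rightarrow> (nat \<Rightarrow> real) \<Rightarrow> nat \<Rightarrow> real" where
  "tens_app m n A x i = (\<Sum>is\<in>idx_lists n (m - 1). A (i # is) * prod_list (map x is))"

definition sub_symmetric :: "nat \<Rightarrow> nat \<Rightarrow> (nat list \<Rightarrow> real) \<Rightarrow> bool" where
  "sub_symmetric m n A \<longleftrightarrow>
     (\<forall>i<n. \<forall>is\<in>idx_lists n (m - 1). \<forall>\<sigma>. \<sigma> permutes {..<m - 1} \<longrightarrow>
        A (i # map (\<lambda>k. is ! \<sigma> k) [0..<m - 1]) = A (i # is))"

definition obj :: "nat \<Rightarrow> nat \<Rightarrow> (nat \<Rightarrow> real) \<Rightarrow> (nat \<Rightarrow> real) \<Rightarrow> (nat \<Rightarrow> real) \<Rightarrow> real \<Rightarrow> real" where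
  "obj m n x y w lam = (\<Sum>k<n. (y k - root (m - 1) lam * x k)^2) + (\<Sum>k<n. x k * w k)^2"

definition feasible :: "nat \<Rightarrow> nat \<Rightarrow> (nat \<Rightarrow> nat) \<Rightarrow> (nat list \<Rightarrow> real) \<Rightarrow> (nat list \<Rightarrow> real)
   \<Rightarrow> (nat \<Rightarrow> real) \<Rightarrow> (nat \<Rightarrow> real) \<Rightarrow> (nat \<Rightarrow> real) \<Rightarrow> real \<Rightarrow> bool" where
  "feasible m r ns A B x y w lam \<longleftrightarrow>
     (\<forall>k<tot_dim r ns. w k - tens_app m (tot_dim r ns) A y k + tens_app m (tot_dim r ns) B x k = 0) \<and>
     (\<forall>i<r. (head ns x i)^2 - tail_sq ns x i \<ge> 0 \<and> head ns x i \<ge> 0) \<and>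
     (\<forall>i<r. (head ns w i)^2 - tail_sq ns w i \<ge> 0 \<and> head ns w i \<ge> 0) \<and>
     e_dot r ns x = 1 \<and> e_dot r ns y = root (m - 1) lam"

definition lagr :: "nat \<Rightarrow> nat \<Rightarrow> (nat \<Rightarrow> nat) \<Rightarrow> (nat list \<Rightarrow> real) \<Rightarrow> (nat list \<Rightarrow> real)
   \<Rightarrow> (nat \<Rightarrow> real) \<Rightarrow> (nat \<Rightarrow> real) \<Rightarrow> (nat \<Rightarrow> real) \<Rightarrow> (nat \<Rightarrow> real) \<Rightarrow> (nat \<Rightarrow> real) \<Rightarrow> real \<Rightarrow> real
   \<Rightarrow> (nat \<Rightarrow> real) \<Rightarrow> (nat \<Rightarrow> real) \<Rightarrow> (nat \<Rightarrow> real) \<Rightarrow> real \<Rightarrow> real" where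
  "lagr m r ns A B al be ga mu th de et x y w lam =
     (let n = tot_dim r ns in
      obj m n x y w lam
      - (\<Sum>k<n. al k * (w k - tens_app m n A y k + tens_app m n B x k))
      - (\<Sum>i<r. be i * ((head ns x i)^2 - tail_sq ns x i))
      - (\<Sum>i<r. ga i * head ns x i)
      - (\<Sum>i<r. mu i * ((head ns w i)^2 - tail_sq ns w i))
      - (\<Sum>i<r. th i * head ns w i)
      - de * (e_dot r ns x - 1)
      - et * (e_dot r ns y - root (m - 1) lam))"

definition stationary_with :: "nat \<Rightarrow> nat \<Rightarrow> (nat \<Rightarrow> nat) \<Rightarrow> (nat list \<Rightarrow> real) \<Rightarrow> (nat list \<Rightarrow> real)
   \<Rightarrow> (nat \<Rightarrow> real) \<Rightarrow> (nat \<Rightarrow> real) \<Rightarrow> (nat \<Rightarrow> real) \<Rightarrow> (nat \<Rightarrow> real) \<Rightarrow> (nat \<Rightarrow> real) \<Rightarrow> real \<Rightarrow> real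
   \<Rightarrow> (nat \<Rightarrow> real) \<Rightarrow> (nat \<Rightarrow> real) \<Rightarrow> (nat \<Rightarrow> real) \<Rightarrow> real \<Rightarrow> bool" where
  "stationary_with m r ns A B al be ga mu th de et x y w lam \<longleftrightarrow>
     feasible m r ns A B x y w lam \<and>
     (\<forall>i<r. be i \<ge> 0 \<and> ga i \<ge> 0 \<and> mu i \<ge> 0 \<and> th i \<ge> 0) \<and>
     (\<forall>i<r. be i * ((head ns x i)^2 - tail_sq ns x i) = 0 \<and> ga i * head ns x i = 0 \<and>
            mu i * ((head ns w i)^2 - tail_sq ns w i) = 0 \<and> th i * head ns w i = 0) \<and>
     (let L = lagr m r ns A B al be ga mu th de et in
       (\<forall>k<tot_dim r ns. ((\<lambda>t. L (x(k := t)) y w lam) has_real_derivative 0) (at (x k))) \<and>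
       (\<forall>k<tot_dim r ns. ((\<lambda>t. L x (y(k := t)) w lam) has_real_derivative 0) (at (y k))) \<and>
       (\<forall>k<tot_dim r ns. ((\<lambda>t. L x y (w(k := t)) lam) has_real_derivative 0) (at (w k))) \<and>
       ((\<lambda>t. L x y w t) has_real_derivative 0) (at lam))"

end

theory Submission
  imports Defs
begin


definition epd :: "nat \<Rightarrow> ((nat \<Rightarrow> real) \<Rightarrow> real) \<Rightarrow> ((nat \<Rightarrow> real) \<Rightarrow> real) \<Rightarrow> bool" where
  "epd n P E \<longleftrightarrow> (\<forall>x. \<exists>D. (\<forall>k<n. ((\<lambda>t. P (x(k:=t))) has_real_derivative D k) (at (x k)))
        \<and> (\<Sum>k<n. x k * D k) = E x)"

lemma epd_const: "epd n (\<lambda>x. c) (\<lambda>x. 0)"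
  unfolding epd_def by (intro allI exI[of _ "\<lambda>k. 0"]) auto

lemma epd_coord: assumes "j < n" shows "epd n (\<lambda>x. x j) (\<lambda>x. x j)"
  unfolding epd_def
proof (intro allI exI[of _ "\<lambda>k. if k = j then 1 else 0"] conjI allI impI)
  fix x :: "nat \<Rightarrow> real" and k assume "k < n"
  show "((\<lambda>t. (x(k := t)) j) has_real_derivative (if k = j then 1 else 0)) (at (x k))"
    by (cases "k = j") (auto intro!: derivative_eq_intros)
next
  fix x :: "nat \<Rightarrow> real"
  show "(\<Sum>k<n. x k * (if k = j then 1 else 0)) = x j"
    using assms by (simp add: if_distrib[of "(*) _"] sum.delta cong: if_cong)
qed

lemma epd_add: "epd n P E1 \<Longrightarrow> epd n Q E2 \<Longrightarrow> epd n (\<lambda>x. P x + Q x) (\<lambda>x. E1 x + E2 x)"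
  unfolding epd_def
proof (intro allI)
  fix x assume a: "\<forall>x. \<exists>D. (\<forall>k<n. ((\<lambda>t. P (x(k := t))) has_real_derivative D k) (at (x k))) \<and> (\<Sum>k<n. x k * D k) = E1 x"
    and b: "\<forall>x. \<exists>D. (\<forall>k<n. ((\<lambda>t. Q (x(k := t))) has_real_derivative D k) (at (x k))) \<and> (\<Sum>k<n. x k * D k) = E2 x"
  obtain D1 where 1: "\<forall>k<n. ((\<lambda>t. P (x(k := t))) has_real_derivative D1 k) (at (x k))" "(\<Sum>k<n. x k * D1 k) = E1 x" using a by blast
  obtain D2 where 2: "\<forall>k<n. ((\<lambda>t. Q (x(k := t))) has_real_derivative D2 k) (at (x k))" "(\<Sum>k<n. x k * D2 k) = E2 x" using b by blast
  show "\<exists>D. (\<forall>k<n. ((\<lambda>t. P (x(k := t)) + Q (x(k := t))) has_real_derivative D k) (at (x k))) \<and> (\<Sum>k<n. x k * D k) = E1 x + E2 x"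
  proof (rule exI[of _ "\<lambda>k. D1 k + D2 k"], intro conjI allI impI)
    fix k assume "k < n"
    show "((\<lambda>t. P (x(k := t)) + Q (x(k := t))) has_real_derivative D1 k + D2 k) (at (x k))"
      using DERIV_add[OF 1(1)[rule_format, OF \<open>k<n\<close>] 2(1)[rule_format, OF \<open>k<n\<close>]] .
  next
    show "(\<Sum>k<n. x k * (D1 k + D2 k)) = E1 x + E2 x"
      using 1(2) 2(2) by (simp add: distrib_left sum.distrib)
  qed
qed

lemma epd_mult: "epd n P E1 \<Longrightarrow> epd n Q E2 \<Longrightarrow> epd n (\<lambda>x. P x * Q x) (\<lambda>x. E1 x * Q x + P x * E2 x)"
  unfolding epd_def
proof (intro allI)
  fix x assume a: "\<forall>x. \<exists>D. (\<forall>k<n. ((\<lambda>t. P (x(k := t))) has_real_derivative D k) (at (x k))) \<and> (\<Sum>k<n. x k * D k) = E1 x"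
    and b: "\<forall>x. \<exists>D. (\<forall>k<n. ((\<lambda>t. Q (x(k := t))) has_real_derivative D k) (at (x k))) \<and> (\<Sum>k<n. x k * D k) = E2 x"
  obtain D1 where 1: "\<forall>k<n. ((\<lambda>t. P (x(k := t))) has_real_derivative D1 k) (at (x k))" "(\<Sum>k<n. x k * D1 k) = E1 x" using a by blast
  obtain D2 where 2: "\<forall>k<n. ((\<lambda>t. Q (x(k := t))) has_real_derivative D2 k) (at (x k))" "(\<Sum>k<n. x k * D2 k) = E2 x" using b by blast
  have "(\<Sum>k<n. x k * (D1 k * Q x + P x * D2 k)) = E1 x * Q x + P x * E2 x"
  proof -
    have "(\<Sum>k<n. x k * (D1 k * Q x + P x * D2 k)) = (\<Sum>k<n. x k * D1 k) * Q x + P x * (\<Sum>k<n. x k * D2 k)"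
    proof -
      have "(\<Sum>k<n. x k * (D1 k * Q x + P x * D2 k)) = (\<Sum>k<n. (x k * D1 k) * Q x + P x * (x k * D2 k))"
        by (rule sum.cong) (simp_all add: distrib_left mult.assoc mult.left_commute)
      also have "\<dots> = (\<Sum>k<n. x k * D1 k) * Q x + P x * (\<Sum>k<n. x k * D2 k)"
        by (simp only: sum.distrib sum_distrib_left sum_distrib_right)
      finally show ?thesis .
    qed
    then show ?thesis using 1(2) 2(2) by simp
  qed
  moreover have "\<forall>k<n. ((\<lambda>t. P (x(k := t)) * Q (x(k := t))) has_real_derivative (D1 k * Q x + P x * D2 k)) (at (x k))"
  proof (intro allI impI)
    fix k assume "k < n"
    have "((\<lambda>t. P (x(k := t)) * Q (x(k := t))) has_real_derivative (D1 k * Q (x(k:=x k)) + P (x(k:=x k)) * D2 k)) (at (x k))"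
      using DERIV_mult[OF 1(1)[rule_format, OF \<open>k<n\<close>] 2(1)[rule_format, OF \<open>k<n\<close>]]
      by (simp only: fun_upd_triv add.commute mult.commute)
    then show "((\<lambda>t. P (x(k := t)) * Q (x(k := t))) has_real_derivative (D1 k * Q x + P x * D2 k)) (at (x k))" by simp
  qed
  ultimately show "\<exists>D. (\<forall>k<n. ((\<lambda>t. P (x(k := t)) * Q (x(k := t))) has_real_derivative D k) (at (x k))) \<and> (\<Sum>k<n. x k * D k) = E1 x * Q x + P x * E2 x"
    by (intro exI[of _ "\<lambda>k. D1 k * Q x + P x * D2 k"] conjI)
qed

lemma epd_cong: "epd n P E \<Longrightarrow> (\<And>x. P x = P' x) \<Longrightarrow> (\<And>x. E x = E' x) \<Longrightarrow> epd n P' E'"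
proof -
  assume "epd n P E" "\<And>x. P x = P' x" "\<And>x. E x = E' x"
  then have "P = P'" "E = E'" by auto
  with \<open>epd n P E\<close> show ?thesis by simp
qed

lemma epd_neg: "epd n P E \<Longrightarrow> epd n (\<lambda>x. - P x) (\<lambda>x. - E x)"
  by (rule epd_cong[OF epd_mult[OF epd_const[of n "-1"]]]) auto

lemma epd_diff: "epd n P E1 \<Longrightarrow> epd n Q E2 \<Longrightarrow> epd n (\<lambda>x. P x - Q x) (\<lambda>x. E1 x - E2 x)"
  by (rule epd_cong[OF epd_add[OF _ epd_neg]]) auto

lemma epd_cmult: "epd n P E \<Longrightarrow> epd n (\<lambda>x. c * P x) (\<lambda>x. c * E x)"
  by (rule epd_cong[OF epd_mult[OF epd_const]]) auto

lemma epd_sq: "epd n P E \<Longrightarrow> epd n (\<lambda>x. (P x)^2) (\<lambda>x. 2 * P x * E x)"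
  by (rule epd_cong[OF epd_mult]) (auto simp: power2_eq_square)

lemma epd_sum: "finite I \<Longrightarrow> (\<And>i. i \<in> I \<Longrightarrow> epd n (P i) (E i)) \<Longrightarrow>
   epd n (\<lambda>x. \<Sum>i\<in>I. P i x) (\<lambda>x. \<Sum>i\<in>I. E i x)"
proof (induction I rule: finite_induct)
  case empty then show ?case by (simp add: epd_const)
next
  case (insert a F)
  then show ?case by (auto intro!: epd_add)
qed

lemma epd_prod_list: "set xs \<subseteq> {..<n} \<Longrightarrow> epd n (\<lambda>x. prod_list (map x xs)) (\<lambda>x. real (length xs) * prod_list (map x xs))"
proof (induction xs)
  case Nil then show ?case by (simp add: epd_const)
next
  case (Cons a xs)
  then show ?case
  proof -
    have ih: "epd n (\<lambda>x. prod_list (map x xs)) (\<lambda>x. real (length xs) * prod_list (map x xs))"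
      using Cons by simp
    have an: "a < n" using Cons.prems by simp
    show ?case
    proof (rule epd_cong[OF epd_mult[OF epd_coord[OF an] ih]])
    fix x :: "nat \<Rightarrow> real"
    show "x a * prod_list (map x xs) = prod_list (map x (a # xs))" by simp
    show "x a * prod_list (map x xs) + x a * (real (length xs) * prod_list (map x xs)) =
          real (length (a # xs)) * prod_list (map x (a # xs))" by (simp add: distrib_right)
    qed
  qed
qed

lemma epd_tens: "m \<ge> 1 \<Longrightarrow> epd n (\<lambda>x. tens_app m n A x k) (\<lambda>x. real (m - 1) * tens_app m n A x k)"
proof -
  assume m: "m \<ge> 1"
  have fin: "finite (idx_lists n (m - 1))"
    using finite_lists_length_eq[of "{..<n}" "m - 1"] unfolding idx_lists_def
    by (simp add: conj_commute)
  have "epd n (\<lambda>x. \<Sum>xs\<in>idx_lists n (m - 1). A (k # xs) * prod_list (map x xs))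
       (\<lambda>x. \<Sum>xs\<in>idx_lists n (m - 1). A (k # xs) * (real (length xs) * prod_list (map x xs)))"
    by (rule epd_sum[OF fin epd_cmult[OF epd_prod_list]]) (simp add: idx_lists_def)
  then show ?thesis
    unfolding tens_app_def
    by (rule epd_cong) (auto simp: sum_distrib_left idx_lists_def intro!: sum.cong)
qed

lemma epd_zero: assumes "epd n P E" "\<forall>k<n. ((\<lambda>t. P (x(k:=t))) has_real_derivative 0) (at (x k))"
  shows "E x = 0"
proof -
  obtain D where D: "\<forall>k<n. ((\<lambda>t. P (x(k:=t))) has_real_derivative D k) (at (x k))" "(\<Sum>k<n. x k * D k) = E x"
    using assms(1) unfolding epd_def by blast
  have "\<forall>k<n. D k = 0" using D(1) assms(2) DERIV_unique by blast
  then show ?thesis using D(2) by simp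
qed



lemma blk_bound: assumes "i < r" shows "blk_off ns i + ns i \<le> tot_dim r ns"
proof -
  have "blk_off ns i + ns i = (\<Sum>j<Suc i. ns j)" by (simp add: blk_off_def)
  also have "\<dots> \<le> (\<Sum>j<r. ns j)" using assms by (intro sum_mono2) auto
  finally show ?thesis by (simp add: tot_dim_def)
qed

lemma epd_head: assumes "i < r" "ns i \<ge> 1" shows "epd (tot_dim r ns) (\<lambda>x. head ns x i) (\<lambda>x. head ns x i)"
  unfolding head_def using blk_bound[OF assms(1), of ns] assms(2) by (intro epd_coord) auto

lemma epd_tail: assumes "i < r" shows "epd (tot_dim r ns) (\<lambda>x. tail_sq ns x i) (\<lambda>x. 2 * tail_sq ns x i)"
  unfolding tail_sq_def
  by (rule epd_cong[OF epd_sum[OF _ epd_sq[OF epd_coord]]])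
     (use blk_bound[OF assms, of ns] in \<open>auto simp: sum_distrib_left power2_eq_square intro!: sum.cong\<close>)

lemma epd_edot: assumes "\<forall>i<r. ns i \<ge> 1" shows "epd (tot_dim r ns) (\<lambda>x. e_dot r ns x) (\<lambda>x. e_dot r ns x)"
  unfolding e_dot_def using assms by (intro epd_sum epd_head) auto

lemmas epd_rules = epd_add epd_diff epd_mult epd_sq epd_sum epd_tens epd_head epd_tail epd_edot epd_coord epd_const

schematic_goal lagr_x: assumes "\<forall>i<r. ns i \<ge> 1" "m \<ge> 1"
  shows "epd (tot_dim r ns) (\<lambda>x. lagr m r ns A B al be ga mu th de et x y w lam) ?E"
  unfolding lagr_def Let_def obj_def
  by (rule epd_rules finite_lessThan | use assms in force)+

schematic_goal lagr_y: assumes "\<forall>i<r. ns i \<ge> 1" "m \<ge> 1"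
  shows "epd (tot_dim r ns) (\<lambda>y. lagr m r ns A B al be ga mu th de et x y w lam) ?E"
  unfolding lagr_def Let_def obj_def
  by (rule epd_rules finite_lessThan | use assms in force)+

schematic_goal lagr_w: assumes "\<forall>i<r. ns i \<ge> 1" "m \<ge> 1"
  shows "epd (tot_dim r ns) (\<lambda>w. lagr m r ns A B al be ga mu th de et x y w lam) ?E"
  unfolding lagr_def Let_def obj_def
  by (rule epd_rules finite_lessThan | use assms in force)+




theorem theorem5:
  fixes m r :: nat and ns :: "nat \<Rightarrow> nat"
    and A B :: "nat list \<Rightarrow> real"
    and x y w :: "nat \<Rightarrow> real" and lam :: real
    and al be ga mu th :: "nat \<Rightarrow> real" and de et :: real
  assumes "even m" and "m \<ge> 2"
    and "\<forall>i<r. ns i \<ge> 1"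
    and "sub_symmetric m (tot_dim r ns) A"
    and "sub_symmetric m (tot_dim r ns) B"
    and "stationary_with m r ns A B al be ga mu th de et x y w lam"
    and "lam \<noteq> 0"
  shows "obj m (tot_dim r ns) x y w lam = 0 \<longleftrightarrow> de = 0 \<and> et = 0"
proof -
  define n where "n = tot_dim r ns"
  define s where "s = root (m - 1) lam"
  define L where "L = lagr m r ns A B al be ga mu th de et"
  have m1: "m \<ge> 1" using assms(2) by simp
  note st = assms(6)[unfolded stationary_with_def Let_def feasible_def]
  have feasw: "\<forall>k<n. w k - tens_app m n A y k + tens_app m n B x k = 0" using st n_def by blast
  have ex1: "e_dot r ns x = 1" and eys: "e_dot r ns y = s" using st s_def by blast+
  have compl: "\<forall>i<r. be i * ((head ns x i)^2 - tail_sq ns x i) = 0 \<and> ga i * head ns x i = 0 \<and>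
            mu i * ((head ns w i)^2 - tail_sq ns w i) = 0 \<and> th i * head ns w i = 0" using st by blast
  have dx: "\<forall>k<n. ((\<lambda>t. L (x(k := t)) y w lam) has_real_derivative 0) (at (x k))"
   and dy: "\<forall>k<n. ((\<lambda>t. L x (y(k := t)) w lam) has_real_derivative 0) (at (y k))"
   and dw: "\<forall>k<n. ((\<lambda>t. L x y (w(k := t)) lam) has_real_derivative 0) (at (w k))"
   and dl: "((\<lambda>t. L x y w t) has_real_derivative 0) (at lam)"
    using st unfolding L_def n_def by blast+
  note zs = mult_zero_left mult_zero_right add_0 add_0_right diff_zero diff_0 diff_self sum.neutral_const
  define M where "M = real (m - 1)"
  define Ux where "Ux = (\<Sum>k<n. (y k - s * x k) * x k)"
  define Uy where "Uy = (\<Sum>k<n. (y k - s * x k) * y k)"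
  define U where "U = (\<Sum>k<n. (y k - s * x k)^2)"
  define p where "p = (\<Sum>k<n. x k * w k)"
  define SF where "SF = (\<Sum>k<n. al k * tens_app m n A y k)"
  define SG where "SG = (\<Sum>k<n. al k * tens_app m n B x k)"
  define Sw where "Sw = (\<Sum>k<n. al k * w k)"
  have E0: "(\<Sum>i<n. 2 * (y i - s * x i) * - (s * x i)) + 2 * p * p
      - (\<Sum>i<n. al i * (M * tens_app m n B x i)) - (\<Sum>i<r. be i * (2 * head ns x i * head ns x i - 2 * tail_sq ns x i))
      - (\<Sum>i<r. ga i * head ns x i) - 0 - 0 - de * e_dot r ns x - 0 = 0"
    using epd_zero[OF lagr_x[OF assms(3) m1, where A=A and B=B and al=al and be=be and ga=ga and mu=mu
       and th=th and de=de and et=et and y=y and w=w and lam=lam] dx[unfolded L_def n_def]]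
    unfolding L_def n_def s_def M_def p_def by (simp only: zs)
  have Ey: "(\<Sum>i<n. 2 * (y i - s * x i) * y i) - (\<Sum>i<n. al i * - (M * tens_app m n A y i)) - et * e_dot r ns y = 0"
    using epd_zero[OF lagr_y[OF assms(3) m1, where A=A and B=B and al=al and be=be and ga=ga and mu=mu
       and th=th and de=de and et=et and x=x and w=w and lam=lam] dy[unfolded L_def n_def]]
    unfolding L_def n_def s_def M_def p_def by (simp only: zs)
  have Ew: "2 * p * (\<Sum>i<n. x i * w i) - (\<Sum>i<n. al i * w i) - (\<Sum>i<r. mu i * (2 * head ns w i * head ns w i - 2 * tail_sq ns w i)) - (\<Sum>i<r. th i * head ns w i) = 0"
    using epd_zero[OF lagr_w[OF assms(3) m1, where A=A and B=B and al=al and be=be and ga=ga and mu=mu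
       and th=th and de=de and et=et and x=x and y=y and lam=lam] dw[unfolded L_def n_def]]
    unfolding L_def n_def s_def M_def p_def by (simp only: zs)
  have mpos: "0 < m - 1" using assms(2) by simp
  have modd: "odd (m - 1)" using assms(1,2) by simp
  have s0: "s \<noteq> 0" unfolding s_def using mpos assms(7) by simp
  define Db where "Db = inverse (real (m - 1) * s ^ (m - 1 - Suc 0))"
  have Db0: "Db \<noteq> 0" unfolding Db_def using s0 mpos by simp
  have droot: "DERIV (root (m - 1)) lam :> Db"
    unfolding Db_def s_def using mpos assms(7) modd by (intro DERIV_real_root_generic) auto
  define C where "C = (\<Sum>k<n. x k * w k)^2 - (\<Sum>k<n. al k * (w k - tens_app m n A y k + tens_app m n B x k))
      - (\<Sum>i<r. be i * ((head ns x i)^2 - tail_sq ns x i)) - (\<Sum>i<r. ga i * head ns x i)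
      - (\<Sum>i<r. mu i * ((head ns w i)^2 - tail_sq ns w i)) - (\<Sum>i<r. th i * head ns w i)
      - de * (e_dot r ns x - 1) - et * e_dot r ns y"
  define Phi where "Phi = (\<lambda>u. (\<Sum>k<n. (y k - u * x k)^2) + C + et * u)"
  have hL: "(\<lambda>t. L x y w t) = Phi \<circ> root (m - 1)"
    by (rule ext) (simp add: L_def lagr_def Let_def obj_def n_def Phi_def C_def algebra_simps)
  have dPhi: "DERIV Phi s :> (\<Sum>k<n. 2 * (y k - s * x k) * (- x k)) + et"
    unfolding Phi_def by (auto intro!: derivative_eq_intros sum.cong simp: algebra_simps)
  have "DERIV (\<lambda>t. L x y w t) lam :> ((\<Sum>k<n. 2 * (y k - s * x k) * (- x k)) + et) * Db"
    unfolding hL using DERIV_chain[OF dPhi[unfolded s_def] droot] by (simp add: s_def comp_def)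
  then have "((\<Sum>k<n. 2 * (y k - s * x k) * (- x k)) + et) * Db = 0"
    using dl DERIV_unique by blast
  then have El: "(\<Sum>k<n. 2 * (y k - s * x k) * (- x k)) + et = 0" using Db0 by simp
  have hUy: "Uy = U + s * Ux"
  proof -
    have "Uy = (\<Sum>k<n. (y k - s * x k)^2 + s * ((y k - s * x k) * x k))"
      unfolding Uy_def by (rule sum.cong) (simp_all add: power2_eq_square algebra_simps)
    also have "\<dots> = U + s * Ux" by (simp add: U_def Ux_def sum.distrib sum_distrib_left)
    finally show ?thesis .
  qed
  have et_eq: "et = 2 * Ux"
  proof -
    have "(\<Sum>k<n. 2 * (y k - s * x k) * (- x k)) = - (2 * Ux)"
      unfolding Ux_def sum_distrib_left sum_negf[symmetric] by (rule sum.cong) (simp_all add: algebra_simps)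
    then show ?thesis using El by simp
  qed
  have bez: "(\<Sum>i<r. be i * (2 * head ns x i * head ns x i - 2 * tail_sq ns x i)) = 0"
    by (rule sum.neutral) (use compl in \<open>auto simp: power2_eq_square algebra_simps\<close>)
  have gaz: "(\<Sum>i<r. ga i * head ns x i) = 0"
    by (rule sum.neutral) (use compl in auto)
  have muz: "(\<Sum>i<r. mu i * (2 * head ns w i * head ns w i - 2 * tail_sq ns w i)) = 0"
    by (rule sum.neutral) (use compl in \<open>auto simp: power2_eq_square algebra_simps\<close>)
  have thz: "(\<Sum>i<r. th i * head ns w i) = 0"
    by (rule sum.neutral) (use compl in auto)
  have t1: "(\<Sum>i<n. 2 * (y i - s * x i) * - (s * x i)) = - 2 * s * Ux"
    unfolding Ux_def by (simp add: sum_distrib_left sum_negf algebra_simps)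
  have t3: "(\<Sum>i<n. al i * (M * tens_app m n B x i)) = M * SG"
    unfolding SG_def by (simp add: sum_distrib_left algebra_simps)
  have hx: "- 2 * s * Ux + 2 * p * p - M * SG - de = 0"
    using E0 t1 t3 bez gaz ex1 by simp
  have t1y: "(\<Sum>i<n. 2 * (y i - s * x i) * y i) = 2 * Uy"
    unfolding Uy_def by (simp add: sum_distrib_left algebra_simps)
  have t3y: "(\<Sum>i<n. al i * - (M * tens_app m n A y i)) = - (M * SF)"
    unfolding SF_def by (simp add: sum_distrib_left sum_negf algebra_simps)
  have hy: "2 * Uy + M * SF - et * s = 0"
    using Ey t1y t3y eys by simp
  have hw: "2 * p * p - Sw = 0"
    using Ew muz thz unfolding p_def Sw_def by simp
  have hSw: "Sw = SF - SG"
  proof -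
    have "Sw = (\<Sum>k<n. al k * tens_app m n A y k - al k * tens_app m n B x k)"
      unfolding Sw_def
    proof (rule sum.cong)
      fix k assume "k \<in> {..<n}"
      then have "w k = tens_app m n A y k - tens_app m n B x k" using feasw by force
      then show "al k * w k = al k * tens_app m n A y k - al k * tens_app m n B x k"
        by (simp add: right_diff_distrib)
    qed simp
    then show ?thesis by (simp add: SF_def SG_def sum_subtractf)
  qed
  have hM: "M * (2 * p * p) = M * SF - M * SG"
  proof -
    have "2 * p * p = SF - SG" using hw hSw by simp
    then show ?thesis by (simp add: right_diff_distrib)
  qed
  have key: "de = 2 * (M + 1) * (p * p) + 2 * U - 2 * (s * Ux)"
  proof -
    have a: "et * s = 2 * (s * Ux)" using et_eq by simp
    show ?thesis using hM hx hy hUy a by (simp add: algebra_simps)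
  qed
  have Mnn: "M \<ge> 0" unfolding M_def by simp
  have U0: "U \<ge> 0" unfolding U_def by (simp add: sum_nonneg)
  have objeq: "obj m (tot_dim r ns) x y w lam = U + p * p"
    unfolding obj_def U_def p_def n_def s_def by (simp add: power2_eq_square)
  show ?thesis
  proof
    assume "obj m (tot_dim r ns) x y w lam = 0"
    then have "U + p * p = 0" using objeq by simp
    moreover have "p * p \<ge> 0" by simp
    ultimately have Uz: "U = 0" and pz: "p * p = 0" using U0 by linarith+
    have "\<forall>k\<in>{..<n}. (y k - s * x k)^2 = 0"
      using Uz unfolding U_def by (subst (asm) sum_nonneg_eq_0_iff) auto
    then have "Ux = 0" unfolding Ux_def by (intro sum.neutral) simp
    then show "de = 0 \<and> et = 0" using key et_eq Uz pz by simp
  next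
    assume h: "de = 0 \<and> et = 0"
    then have "Ux = 0" using et_eq by simp
    then have "2 * (M + 1) * (p * p) + 2 * U = 0" using key h by simp
    moreover have "(M + 1) * (p * p) \<ge> 0" using Mnn by simp
    ultimately have "U = 0" "(M + 1) * (p * p) = 0" using U0 by linarith+
    then have "p * p = 0" using Mnn by simp
    then show "obj m (tot_dim r ns) x y w lam = 0" using objeq \<open>U = 0\<close> by simp
  qed
qed

end
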